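(* Let $\mathcal{C}=(V,\mathcal{R})$ be a coherent configuration with fibers $X,Y$ such that $m=|X|=|Y|$ is a prime, $r=|\mathcal{R}_X|>2$ and $|\mathcal{R}_{X,Y}|>1$, and let $k=\frac{m-1}{r-1}$. If $(k,m)=(44,89)$, then $1\in\{d_S\mid S\in\mathcal{R}_{X,Y}\}$.
   Context: A coherent configuration is a pair $\mathcal{C}=(V,\mathcal{R})$ where $V$ is a finite set and $\mathcal{R}$ is a partition of $V\times V$ into nonempty sets such that: (1) the diagonal $\Delta_V$ is a union of members of $\mathcal{R}$; (2) for each $R\in\mathcal{R}$ its transpose $R^t=\{(u,v)\mid (v,u)\in R\}$ belongs to $\mathcal{R}$; (3) for all $R,S,T\in\mathcal{R}$ there is a constant $c_{RS}^T$ with $c_{RS}^T=|R(u)\cap S^t(v)|$ for all $(u,v)\in T$, where $T(w)=\{z\in V\mid (w,z)\in T\}$. A subset $X\subseteq V$ is a fiber if $\Delta_X\in\mathcal{R}$. For fibers $X,Y$, $\mathcal{R}_{X,Y}=\{R\in\mathcal{R}\mid R\subseteq X\times Y\}$, $\mathcal{R}_X=\mathcal{R}_{X,X}$, and for $R\in\mathcal{R}_{X,Y}$, $d_R=c_{RR^t}^{\Delta_X}=|R(x)|$ for any $x\in X$. *)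

theory Defs
  imports Complex_Main "HOL-Library.Disjoint_Sets" "HOL-Computational_Algebra.Primes"
begin

definition coherent_configuration :: "'a set \<Rightarrow> ('a \<times> 'a) set set \<Rightarrow> bool" where
  "coherent_configuration V \<R> \<longleftrightarrow>
     finite V \<and>
     partition_on (V \<times> V) \<R> \<and>
     Id_on V = \<Union>{S \<in> \<R>. S \<subseteq> Id_on V} \<and>
     (\<forall>S\<in>\<R>. S\<inverse> \<in> \<R>) \<and>
     (\<forall>R\<in>\<R>. \<forall>S\<in>\<R>. \<forall>T\<in>\<R>. \<exists>c::nat. \<forall>(u,v)\<in>T.
        card (R `` {u} \<inter> (S\<inverse>) `` {v}) = c)"

definition fiber :: "('a \<times> 'a) set set \<Rightarrow> 'a set \<Rightarrow> bool" where
  "fiber \<R> X \<longleftrightarrow> Id_on X \<in> \<R>"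

definition rels_between :: "('a \<times> 'a) set set \<Rightarrow> 'a set \<Rightarrow> 'a set \<Rightarrow> ('a \<times> 'a) set set" where
  "rels_between \<R> X Y = {S \<in> \<R>. S \<subseteq> X \<times> Y}"

definition intersection_number :: "('a \<times> 'a) set \<Rightarrow> ('a \<times> 'a) set \<Rightarrow> ('a \<times> 'a) set \<Rightarrow> nat" where
  "intersection_number R S T =
     (let (u, v) = (SOME p. p \<in> T) in card (R `` {u} \<inter> (S\<inverse>) `` {v}))"

definition valency :: "'a set \<Rightarrow> ('a \<times> 'a) set \<Rightarrow> nat" where
  "valency X S = intersection_number S (S\<inverse>) (Id_on X)"

end

theory Submission
  imports Defs "HOL-Analysis.Analysis"
begin



lemma trace_idem_dim:
  fixes E :: "real^'n^'n"
  assumes sym: "transpose E = E" and idem: "E ** E = E"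
  shows "trace E = real (dim (range ((*v) E)))"
proof -
  define W where "W = range ((*v) E)"
  have sub: "subspace W" unfolding W_def
    by (rule linear_subspace_image[OF matrix_vector_mul_linear subspace_UNIV])
  obtain B where BW: "B \<subseteq> W" and orth: "pairwise orthogonal B"
    and nrm: "\<And>x. x \<in> B \<Longrightarrow> norm x = 1" and ind: "independent B"
    and cardB: "card B = dim W" and spanB: "span B = W"
    using orthonormal_basis_subspace[OF sub] by blast
  have finB: "finite B" using ind independent_imp_finite by blast
  have fixb: "E *v b = b" if bB: "b \<in> B" for b
  proof -
    obtain u where "b = E *v u" using BW bB unfolding W_def by blast
    then show ?thesis by (simp add: matrix_vector_mul_assoc idem)
  qed
  have inn: "c \<bullet> b = (if c = b then 1 else 0)" if "c \<in> B" "b \<in> B" for c b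
  proof (cases "c = b")
    case True then show ?thesis using nrm[OF that(1)] by (simp add: dot_square_norm)
  next
    case False then show ?thesis using orth that by (auto simp: pairwise_def orthogonal_def)
  qed
  have expand: "E *v v = (\<Sum>b\<in>B. (b \<bullet> v) *\<^sub>R b)" for v
  proof -
    define u where "u = E *v v - (\<Sum>b\<in>B. (b \<bullet> v) *\<^sub>R b)"
    have "E *v v \<in> W" unfolding W_def by blast
    moreover have "(\<Sum>b\<in>B. (b \<bullet> v) *\<^sub>R b) \<in> W"
      using BW by (intro subspace_sum[OF sub]) (auto intro: subspace_scale[OF sub])
    ultimately have uW: "u \<in> span B" unfolding u_def spanB by (rule subspace_diff[OF sub])
    have "orthogonal u c" if "c \<in> B" for c
    proof -
      have "c \<bullet> (E *v v) = (E *v c) \<bullet> v"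
        by (metis dot_lmul_matrix inner_commute sym transpose_matrix_vector)
      also have "\<dots> = c \<bullet> v" using fixb[OF that] by simp
      finally have 1: "c \<bullet> (E *v v) = c \<bullet> v" .
      have "c \<bullet> (\<Sum>b\<in>B. (b \<bullet> v) *\<^sub>R b) = (\<Sum>b\<in>B. (b \<bullet> v) * (c \<bullet> b))"
        by (simp add: inner_sum_right)
      also have "\<dots> = (\<Sum>b\<in>B. if b = c then c \<bullet> v else 0)"
        by (intro sum.cong refl) (auto simp: inn[OF that])
      also have "\<dots> = c \<bullet> v" using that finB by simp
      finally show ?thesis unfolding u_def orthogonal_def using 1
        by (simp add: inner_diff_right inner_commute)
    qed
    then have "orthogonal u u" using orthogonal_to_span[OF uW] by (metis orthogonal_commute)
    then have "u = 0" by (simp add: orthogonal_self)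
    then show ?thesis unfolding u_def by simp
  qed
  have "trace E = (\<Sum>i\<in>UNIV. (E *v axis i 1) $ i)"
    unfolding trace_def by (intro sum.cong refl) (simp add: matrix_vector_mult_def axis_def if_distrib cong: if_cong)
  also have "\<dots> = (\<Sum>i\<in>UNIV. \<Sum>b\<in>B. (b $ i) * (b $ i))"
    by (simp add: expand inner_axis)
  also have "\<dots> = (\<Sum>b\<in>B. b \<bullet> b)"
    by (subst sum.swap) (simp add: inner_vec_def)
  also have "\<dots> = (\<Sum>b\<in>B. 1)" by (intro sum.cong refl) (simp add: inn)
  also have "\<dots> = real (card B)" by simp
  finally show ?thesis using cardB W_def by simp
qed

lemma trace_nat_89:
  fixes e :: "'a \<Rightarrow> 'a \<Rightarrow> real"
  assumes finX: "finite X" and cX: "card X = 89"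
    and sym: "\<And>x y. x \<in> X \<Longrightarrow> y \<in> X \<Longrightarrow> e x y = e y x"
    and idem: "\<And>x y. x \<in> X \<Longrightarrow> y \<in> X \<Longrightarrow> (\<Sum>z\<in>X. e x z * e z y) = e x y"
  shows "\<exists>n::nat. (\<Sum>x\<in>X. e x x) = real n"
proof -
  have "card (UNIV :: 89 set) = card X" using cX by simp
  then obtain h :: "89 \<Rightarrow> 'a" where h: "bij_betw h UNIV X"
    using finX by (metis finite finite_same_card_bij)
  have hX: "h i \<in> X" for i using h bij_betwE by blast
  define E :: "real^89^89" where "E = (\<chi> i j. e (h i) (h j))"
  have "transpose E = E"
    unfolding E_def transpose_def by (simp add: sym[OF hX hX])
  moreover have "E ** E = E"
  proof -
    have "(\<Sum>k\<in>UNIV. e (h i) (h k) * e (h k) (h j)) = e (h i) (h j)" for i j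
    proof -
      have "(\<Sum>k\<in>UNIV. e (h i) (h k) * e (h k) (h j)) = (\<Sum>z\<in>X. e (h i) z * e z (h j))"
        using sum.reindex_bij_betw[OF h, of "\<lambda>z. e (h i) z * e z (h j)"] by simp
      also have "\<dots> = e (h i) (h j)" by (rule idem[OF hX hX])
      finally show ?thesis .
    qed
    then show ?thesis unfolding E_def by (simp add: matrix_matrix_mult_def vec_eq_iff)
  qed
  ultimately have "trace E = real (dim (range ((*v) E)))" by (rule trace_idem_dim)
  moreover have "trace E = (\<Sum>x\<in>X. e x x)"
    unfolding trace_def E_def using sum.reindex_bij_betw[OF h, of "\<lambda>z. e z z"] by simp
  ultimately show ?thesis by metis
qed



lemma int_case_core:
  fixes a mu p q z :: int
  assumes a1: "1 \<le> a" and a2: "a \<le> 87" and mu0: "0 \<le> mu" and mua: "mu \<le> a"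
    and p0: "0 \<le> p" and q0: "0 \<le> q"
    and pq: "p * q = a - mu"
    and prod: "(a - p) * (a + q) = 89 * mu"
    and N: "a + 44 * (p - q) = z * (p + q)"
    and pr: "prime (89::int)"
  shows False
proof (cases "mu = 0")
  case True
  then have "(a - p) * (a + q) = 0" using prod by simp
  then have pa: "p = a" using a1 q0 by auto
  then have "a * q = a * 1" using pq True by simp
  then have q1: "q = 1" using a1 by (subst (asm) mult_left_cancel) auto
  have "89 = (45 - z) * (a + 1)" using N pa q1 by (simp add: algebra_simps)
  then have "(a + 1) dvd 89" by (metis dvd_triv_right)
  moreover have "\<forall>m. m \<ge> 0 \<and> m dvd 89 \<longrightarrow> m = 1 \<or> m = (89::int)" using pr unfolding prime_int_iff by blast
  moreover have "0 \<le> a + 1" using a1 by simp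
  ultimately have "a + 1 = 1 \<or> a + 1 = 89" by blast
  then show False using a1 a2 by auto
next
  case False
  then have mup: "mu > 0" using mu0 by simp
  have aq: "a + q > 0" using a1 q0 by simp
  have ap: "a - p > 0"
  proof (rule ccontr)
    assume "\<not> a - p > 0"
    then have "(a - p) * (a + q) \<le> 0" using aq by (simp add: mult_nonpos_nonneg)
    then show False using prod mup by simp
  qed
  show False
  proof (cases "p = 0")
    case True
    then have "mu = a" using pq by simp
    then have "a * (a + q) = 89 * a" using prod True by simp
    then have aq89: "a + q = 89" using a1 by simp
    have "a = (z + 44) * q" using N True by (simp add: algebra_simps)
    then have "q dvd a" by simp
    then have "q dvd 89" using aq89 by (metis dvd_add_right_iff dvd_refl)
    then have "q = 1 \<or> q = 89" using pr q0 unfolding prime_int_iff by auto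
    then show False using aq89 a1 a2 by auto
  next
    case False
    then have p1: "p \<ge> 1" using p0 by simp
    have "q < a"
    proof (rule ccontr)
      assume "\<not> q < a"
      then have "p * q \<ge> 1 * a" using p1 a1 by (intro mult_mono) auto
      then show False using pq mup by simp
    qed
    have "89 dvd (a - p) * (a + q)" using prod by simp
    then have "89 dvd (a - p) \<or> 89 dvd (a + q)" using pr prime_dvd_mult_iff by blast
    moreover have "\<not> 89 dvd (a - p)"
    proof
      assume "89 dvd (a - p)"
      then obtain c where "a - p = 89 * c" by blast
      then show False using ap a2 p0 by presburger
    qed
    ultimately have "89 dvd (a + q)" by simp
    then obtain c where c: "a + q = 89 * c" by blast
    have "c = 1" using c aq \<open>q < a\<close> a2 by presburger
    then have "a - p = mu" using prod c by simp
    then have "p * q = p" using pq by simp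
    then have "q = 1" using p1 by simp
    then show False using c \<open>c = 1\<close> a2 by simp
  qed
qed

lemma int_case:
  fixes a lam mu :: nat and t z :: int
  assumes a1: "1 \<le> a" and a2: "a \<le> 87" and mua: "mu \<le> a"
    and srg: "int a * int a = int a - int mu + (int lam - int mu) * int a + 89 * int mu"
    and tt: "t * t = (int lam - int mu)^2 + 4 * (int a - int mu)"
    and N: "int a + 44 * (int lam - int mu) = z * t"
    and pr: "prime (89::int)"
  shows False
proof -
  define D where "D = int lam - int mu"
  obtain t' z' where t0: "t' \<ge> 0" and tt': "t' * t' = D * D + 4 * (int a - int mu)"
      and N': "int a + 44 * D = z' * t'"
  proof (cases "t \<ge> 0")
    case True then show ?thesis using that[of t z] tt N unfolding D_def by (simp add: power2_eq_square)
  next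
    case False then show ?thesis using that[of "-t" "-z"] tt N unfolding D_def by (simp add: power2_eq_square)
  qed
  have "(t' - D) * (t' + D) = 2 * (2 * (int a - int mu))" using tt' by (simp add: algebra_simps)
  then have "even ((t' - D) * (t' + D))" by (metis dvd_triv_left)
  moreover have "even (t' + D) \<longleftrightarrow> even (t' - D)"
  proof -
    have "t' + D = (t' - D) + 2 * D" by simp
    then show ?thesis by (metis even_add even_mult_iff even_numeral)
  qed
  ultimately have "even (t' - D)" by auto
  then obtain k where k: "t' - D = 2 * k" by blast
  define q where "q = k"
  define p where "p = k + D"
  have tpq: "t' = p + q" using k unfolding p_def q_def by simp
  have pq: "p * q = int a - int mu"
  proof -
    have "t' * t' = (2 * k + D) * (2 * k + D)" using k by (simp add: algebra_simps)
    then have "4 * (k * (k + D)) = 4 * (int a - int mu)" using tt' by (simp add: algebra_simps)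
    then show ?thesis unfolding p_def q_def by (simp add: algebra_simps)
  qed
  have pq0: "p * q \<ge> 0" using pq mua by simp
  have p0: "p \<ge> 0" and q0: "q \<ge> 0"
  proof -
    show "p \<ge> 0"
    proof (rule ccontr)
      assume "\<not> p \<ge> 0"
      then have "q > 0" using tpq t0 by simp
      then have "p * q < 0" using \<open>\<not> p \<ge> 0\<close> by (simp add: mult_neg_pos)
      then show False using pq0 by simp
    qed
    show "q \<ge> 0"
    proof (rule ccontr)
      assume "\<not> q \<ge> 0"
      then have "p > 0" using tpq t0 by simp
      then have "p * q < 0" using \<open>\<not> q \<ge> 0\<close> by (simp add: mult_pos_neg)
      then show False using pq0 by simp
    qed
  qed
  have prod: "(int a - p) * (int a + q) = 89 * int mu"
  proof -
    have "(int a - p) * (int a + q) = int a * int a - int a * (p - q) - p * q" by (simp add: algebra_simps)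
    also have "p - q = D" unfolding p_def q_def by simp
    finally show ?thesis using srg pq unfolding D_def by (simp add: algebra_simps)
  qed
  have "int a + 44 * (p - q) = z' * (p + q)" using N' tpq unfolding p_def q_def by simp
  then show False using int_case_core[of "int a" "int mu" p q z'] a1 a2 mua p0 q0 pq prod pr by simp
qed



lemma sum_delta_l: "finite X \<Longrightarrow> x \<in> X \<Longrightarrow> (\<Sum>z\<in>X. of_bool (x = z) * f z) = (f x::real)"
proof -
  assume "finite X" "x \<in> X"
  have "(\<Sum>z\<in>X. of_bool (x = z) * f z) = (\<Sum>z\<in>X. if z = x then f z else 0)"
    by (intro sum.cong refl) auto
  then show ?thesis using \<open>finite X\<close> \<open>x \<in> X\<close> by simp
qed

lemma sum_delta_r: "finite X \<Longrightarrow> y \<in> X \<Longrightarrow> (\<Sum>z\<in>X. f z * of_bool (z = y)) = (f y::real)"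
proof -
  assume "finite X" "y \<in> X"
  have "(\<Sum>z\<in>X. f z * of_bool (z = y)) = (\<Sum>z\<in>X. if z = y then f z else 0)"
    by (intro sum.cong refl) auto
  then show ?thesis using \<open>finite X\<close> \<open>y \<in> X\<close> by simp
qed


lemma psd_gen:
  fixes E :: "'a \<Rightarrow> 'a \<Rightarrow> real"
  assumes finX: "finite X"
    and sym: "\<And>x y. x \<in> X \<Longrightarrow> y \<in> X \<Longrightarrow> E x y = E y x"
    and idem: "\<And>x y. x \<in> X \<Longrightarrow> y \<in> X \<Longrightarrow> (\<Sum>z\<in>X. E x z * E z y) = E x y"
  shows "(\<Sum>x\<in>X. \<Sum>x'\<in>X. v x * v x' * E x x') \<ge> 0"
proof -
  have "(\<Sum>x\<in>X. \<Sum>x'\<in>X. v x * v x' * E x x') = (\<Sum>x\<in>X. \<Sum>x'\<in>X. \<Sum>z\<in>X. (v x * E x z) * (v x' * E x' z))"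
  proof (intro sum.cong refl)
    fix x x' assume x: "x \<in> X" and x': "x' \<in> X"
    have "v x * v x' * E x x' = v x * v x' * (\<Sum>z\<in>X. E x z * E z x')" using idem[OF x x'] by simp
    also have "\<dots> = (\<Sum>z\<in>X. (v x * E x z) * (v x' * E x' z))"
      by (simp add: sum_distrib_left) (intro sum.cong refl, simp add: sym[OF _ x'] algebra_simps)
    finally show "v x * v x' * E x x' = (\<Sum>z\<in>X. (v x * E x z) * (v x' * E x' z))" .
  qed
  also have "\<dots> = (\<Sum>x\<in>X. \<Sum>z\<in>X. \<Sum>x'\<in>X. (v x * E x z) * (v x' * E x' z))"
    by (rule sum.cong[OF refl], rule sum.swap)
  also have "\<dots> = (\<Sum>z\<in>X. \<Sum>x\<in>X. \<Sum>x'\<in>X. (v x * E x z) * (v x' * E x' z))"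
    by (rule sum.swap)
  also have "\<dots> = (\<Sum>z\<in>X. (\<Sum>x\<in>X. v x * E x z) * (\<Sum>x'\<in>X. v x' * E x' z))"
    by (simp only: sum_product)
  also have "\<dots> = (\<Sum>z\<in>X. (\<Sum>x\<in>X. v x * E x z)^2)" by (simp add: power2_eq_square)
  also have "\<dots> \<ge> 0" by (intro sum_nonneg) simp
  finally show ?thesis .
qed

locale srgX =
  fixes X :: "'a set" and A :: "('a \<times> 'a) set" and a lam mu :: nat
  assumes finX: "finite X" and cardX: "card X = 89"
    and A_sub: "A \<subseteq> X \<times> X" and A_sym: "\<And>x y. (x,y) \<in> A \<Longrightarrow> (y,x) \<in> A"
    and A_irr: "\<And>x. (x,x) \<notin> A"
    and A_val: "\<And>x. x \<in> X \<Longrightarrow> card (A``{x}) = a"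
    and A_K: "\<And>x y. x \<in> X \<Longrightarrow> y \<in> X \<Longrightarrow> x \<noteq> y \<Longrightarrow>
          card (A``{x} \<inter> A``{y}) = (if (x,y) \<in> A then lam else mu)"
begin

definition m3 :: "real \<Rightarrow> real \<Rightarrow> real \<Rightarrow> 'a \<Rightarrow> 'a \<Rightarrow> real" where
  "m3 c0 c1 c2 x y = c0 * of_bool (x = y) + c1 * of_bool ((x,y) \<in> A) + c2"

lemma sumA: "x \<in> X \<Longrightarrow> (\<Sum>z\<in>X. of_bool ((x,z) \<in> A) :: real) = a"
proof -
  assume x: "x \<in> X"
  have "X \<inter> {z. (x,z) \<in> A} = A``{x}" using A_sub by auto
  then show ?thesis using finX A_val[OF x] by simp
qed

lemma sumA': "y \<in> X \<Longrightarrow> (\<Sum>z\<in>X. of_bool ((z,y) \<in> A) :: real) = a"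
proof -
  assume y: "y \<in> X"
  have "(\<Sum>z\<in>X. of_bool ((z,y) \<in> A) :: real) = (\<Sum>z\<in>X. of_bool ((y,z) \<in> A))"
  proof -
    have "\<And>z. ((z,y) \<in> A) = ((y,z) \<in> A)" using A_sym by blast
    then show ?thesis by simp
  qed
  then show ?thesis using sumA[OF y] by simp
qed

lemma sumAA: "x \<in> X \<Longrightarrow> y \<in> X \<Longrightarrow>
   (\<Sum>z\<in>X. of_bool ((x,z) \<in> A) * of_bool ((z,y) \<in> A) :: real) =
   (real a - real mu) * of_bool (x = y) + (real lam - real mu) * of_bool ((x,y) \<in> A) + real mu"
proof -
  assume x: "x \<in> X" and y: "y \<in> X"
  have "X \<inter> {z. (x,z) \<in> A \<and> (z,y) \<in> A} = A``{x} \<inter> A``{y}" using A_sub A_sym by auto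
  then have 1: "(\<Sum>z\<in>X. of_bool ((x,z) \<in> A) * of_bool ((z,y) \<in> A) :: real) = card (A``{x} \<inter> A``{y})"
    using finX by (simp flip: of_bool_conj)
  show ?thesis
  proof (cases "x = y")
    case True then show ?thesis using 1 A_val[OF x] A_irr by simp
  next
    case False then show ?thesis using 1 A_K[OF x y False] by (auto simp: A_irr)
  qed
qed

lemma m3_mult:
  assumes x: "x \<in> X" and y: "y \<in> X"
  shows "(\<Sum>z\<in>X. m3 c0 c1 c2 x z * m3 d0 d1 d2 z y) =
    m3 (c0*d0 + c1*d1*(real a - real mu))
       (c0*d1 + c1*d0 + c1*d1*(real lam - real mu))
       (c0*d2 + c2*d0 + c1*d1*real mu + real a*c1*d2 + real a*c2*d1 + 89*c2*d2) x y"
proof -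
  let ?e = "\<lambda>z. of_bool (x = z) :: real" and ?f = "\<lambda>z. of_bool ((x,z) \<in> A) :: real"
  let ?g = "\<lambda>z. of_bool (z = y) :: real" and ?h = "\<lambda>z. of_bool ((z,y) \<in> A) :: real"
  have s1: "(\<Sum>z\<in>X. ?e z * ?g z) = of_bool (x = y)" using sum_delta_l[OF finX x, of ?g] by simp
  have s2: "(\<Sum>z\<in>X. ?e z * ?h z) = of_bool ((x,y) \<in> A)" using sum_delta_l[OF finX x, of ?h] by simp
  have s3: "(\<Sum>z\<in>X. ?e z) = 1" using sum_delta_l[OF finX x, of "\<lambda>_. 1"] by simp
  have s4: "(\<Sum>z\<in>X. ?f z * ?g z) = of_bool ((x,y) \<in> A)" using sum_delta_r[OF finX y, of ?f] by simp
  have s7: "(\<Sum>z\<in>X. ?g z) = 1" using sum_delta_r[OF finX y, of "\<lambda>_. 1"] by simp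
  have s9: "(\<Sum>z\<in>X. 1 :: real) = 89" using cardX by simp
  have "(\<Sum>z\<in>X. m3 c0 c1 c2 x z * m3 d0 d1 d2 z y) =
     (\<Sum>z\<in>X. c0*d0*(?e z * ?g z) + c0*d1*(?e z * ?h z) + c0*d2*?e z
         + c1*d0*(?f z * ?g z) + c1*d1*(?f z * ?h z) + c1*d2*?f z
         + c2*d0*?g z + c2*d1*?h z + c2*d2)"
    unfolding m3_def by (intro sum.cong refl) (simp add: algebra_simps)
  also have "\<dots> = c0*d0*(\<Sum>z\<in>X. ?e z * ?g z) + c0*d1*(\<Sum>z\<in>X. ?e z * ?h z) + c0*d2*(\<Sum>z\<in>X. ?e z)
         + c1*d0*(\<Sum>z\<in>X. ?f z * ?g z) + c1*d1*(\<Sum>z\<in>X. ?f z * ?h z) + c1*d2*(\<Sum>z\<in>X. ?f z)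
         + c2*d0*(\<Sum>z\<in>X. ?g z) + c2*d1*(\<Sum>z\<in>X. ?h z) + c2*d2*(\<Sum>z\<in>X. 1)"
    by (simp add: sum.distrib sum_distrib_left)
  also have "\<dots> = m3 (c0*d0 + c1*d1*(real a - real mu))
       (c0*d1 + c1*d0 + c1*d1*(real lam - real mu))
       (c0*d2 + c2*d0 + c1*d1*real mu + real a*c1*d2 + real a*c2*d1 + 89*c2*d2) x y"
    unfolding s1 s2 s3 s4 s7 s9 sumA[OF x] sumA'[OF y] sumAA[OF x y] m3_def
    by (simp add: algebra_simps)
  finally show ?thesis .
qed

lemma srg_eq: "real a * real a = real a - real mu + (real lam - real mu) * real a + 89 * real mu"
proof -
  obtain x where x: "x \<in> X" using cardX by (metis card.empty ex_in_conv zero_neq_numeral)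
  have "(\<Sum>y\<in>X. \<Sum>z\<in>X. of_bool ((x,z) \<in> A) * of_bool ((z,y) \<in> A) :: real)
      = (\<Sum>z\<in>X. of_bool ((x,z) \<in> A) * (\<Sum>y\<in>X. of_bool ((z,y) \<in> A)))"
    by (subst sum.swap) (simp add: sum_distrib_left)
  also have "\<dots> = (\<Sum>z\<in>X. of_bool ((x,z) \<in> A) * real a)"
  proof (intro sum.cong refl)
    fix z assume "z \<in> X" then show "of_bool ((x,z) \<in> A) * (\<Sum>y\<in>X. of_bool ((z,y) \<in> A)) = of_bool ((x,z) \<in> A) * (real a :: real)"
      using sumA by simp
  qed
  also have "\<dots> = real a * real a" using sumA[OF x] by (simp flip: sum_distrib_right)
  finally have 1: "(\<Sum>y\<in>X. \<Sum>z\<in>X. of_bool ((x,z) \<in> A) * of_bool ((z,y) \<in> A) :: real) = real a * real a" .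
  have "(\<Sum>y\<in>X. \<Sum>z\<in>X. of_bool ((x,z) \<in> A) * of_bool ((z,y) \<in> A) :: real)
     = (\<Sum>y\<in>X. (real a - real mu) * of_bool (x = y) + (real lam - real mu) * of_bool ((x,y) \<in> A) + real mu)"
    by (intro sum.cong refl) (simp add: sumAA x)
  also have "\<dots> = (real a - real mu) + (real lam - real mu) * real a + 89 * real mu"
    using finX x cardX sumA[OF x] by (simp add: sum.distrib flip: sum_distrib_left)
  finally show ?thesis using 1 by simp
qed

definition Dl :: real where "Dl = real lam - real mu"
definition Delta :: real where "Delta = Dl^2 + 4*(real a - real mu)"
definition Ef :: "real \<Rightarrow> 'a \<Rightarrow> 'a \<Rightarrow> real" where
  "Ef w = m3 (-((Dl - w)/2)/w) (1/w) (-(real a - (Dl - w)/2)/(89*w))"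

lemma m3_cong: "e0 = c0 \<Longrightarrow> e1 = c1 \<Longrightarrow> e2 = c2 \<Longrightarrow> m3 e0 e1 e2 x y = m3 c0 c1 c2 x y"
  by simp

lemma Ef_sym: "Ef s x y = Ef s y x"
proof -
  have "((x,y)\<in>A) = ((y,x)\<in>A)" using A_sym by blast
  then show ?thesis unfolding Ef_def m3_def by (simp add: eq_commute)
qed

lemma Ef_idem:
  assumes ss: "s * s = Delta" and s0: "s \<noteq> 0" and x: "x \<in> X" and y: "y \<in> X"
  shows "(\<Sum>z\<in>X. Ef s x z * Ef s z y) = Ef s x y"
proof -
  have srg: "real a * real a = real a - real mu + (real lam - real mu) * real a + 89 * real mu"
    by (rule srg_eq)
  have D: "s * s = (real lam - real mu)^2 + 4*(real a - real mu)" using ss unfolding Delta_def Dl_def .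
  show ?thesis unfolding Ef_def m3_mult[OF x y] Dl_def
  proof (rule m3_cong)
    show "- ((real lam - real mu - s) / 2) / s * (- ((real lam - real mu - s) / 2) / s) +
      1 / s * (1 / s) * (real a - real mu) = - ((real lam - real mu - s) / 2) / s"
      using s0 D by (simp add: field_simps power2_eq_square) algebra
  next
    show "- ((real lam - real mu - s) / 2) / s * (1 / s) + 1 / s * (- ((real lam - real mu - s) / 2) / s) +
    1 / s * (1 / s) * (real lam - real mu) = 1 / s"
      using s0 by (simp add: field_simps)
  next
    show "- ((real lam - real mu - s) / 2) / s * (- (real a - (real lam - real mu - s) / 2) / (89 * s)) +
    - (real a - (real lam - real mu - s) / 2) / (89 * s) * (- ((real lam - real mu - s) / 2) / s) +
    1 / s * (1 / s) * real mu +
    real a * (1 / s) * (- (real a - (real lam - real mu - s) / 2) / (89 * s)) +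
    real a * (- (real a - (real lam - real mu - s) / 2) / (89 * s)) * (1 / s) +
    89 * (- (real a - (real lam - real mu - s) / 2) / (89 * s)) *
    (- (real a - (real lam - real mu - s) / 2) / (89 * s)) =
    - (real a - (real lam - real mu - s) / 2) / (89 * s)"
      using s0 D srg by (simp add: field_simps power2_eq_square) algebra
  qed
qed


lemma conference:
  assumes a1: "1 \<le> a" and a2: "a \<le> 87" and mua: "mu \<le> a" and pr: "prime (89::int)"
  shows "a = 44 \<and> lam = 21 \<and> mu = 22"
proof -
  have srg: "real a * real a = real a - real mu + (real lam - real mu) * real a + 89 * real mu"
    by (rule srg_eq)
  have srgi: "int a * int a = int a - int mu + (int lam - int mu) * int a + 89 * int mu"
  proof -
    have "real_of_int (int a * int a) = real_of_int (int a - int mu + (int lam - int mu) * int a + 89 * int mu)"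
      using srg by simp
    then show ?thesis by (simp only: of_int_eq_iff)
  qed
  have Dpos: "Delta > 0"
  proof -
    have ge: "Delta \<ge> 0" unfolding Delta_def using mua by simp
    have "Delta \<noteq> 0"
    proof
      assume "Delta = 0"
      moreover have "real mu \<le> real a" using mua by simp
      moreover have "Dl^2 \<ge> 0" by simp
      ultimately have h: "Dl^2 + 4 * (real a - real mu) = 0" "real mu \<le> real a" "0 \<le> Dl^2"
        unfolding Delta_def by auto
      from h have "Dl^2 = 0" by (smt (verit))
      from h have "real a = real mu" by (smt (verit))
      from \<open>Dl^2 = 0\<close> have "Dl = 0" by simp
      then have "real a * real a = 89 * real a" using srg \<open>real a = real mu\<close> unfolding Dl_def by (simp add: algebra_simps)
      then show False using a1 a2 by simp
    qed
    then show ?thesis using ge by simp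
  qed
  define w where "w = sqrt Delta"
  have s0: "w > 0" using Dpos unfolding w_def by simp
  have ss: "w * w = Delta" using Dpos unfolding w_def by simp
  obtain f :: nat where f: "(\<Sum>x\<in>X. Ef w x x) = real f"
    using trace_nat_89[OF finX cardX, of "Ef w"] Ef_sym Ef_idem[OF ss] s0 by force
  have "(\<Sum>x\<in>X. Ef w x x) = (\<Sum>x\<in>X. -((Dl - w)/2)/w + (-(real a - (Dl - w)/2)/(89*w)))"
    by (intro sum.cong refl) (simp add: Ef_def m3_def A_irr)
  also have "\<dots> = 89 * (-((Dl - w)/2)/w + (-(real a - (Dl - w)/2)/(89*w)))"
    using cardX by simp
  also have "\<dots> = (44 * w - 44 * Dl - real a) / w" using s0 by (simp add: field_simps)
  finally have "real f = (44 * w - 44 * Dl - real a) / w" using f by simp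
  then have "real f * w = 44 * w - 44 * Dl - real a" using s0 by simp
  then have Nf: "real a + 44 * Dl = (44 - real f) * w" by (simp add: algebra_simps)
  define z :: int where "z = 44 - int f"
  define Nn :: int where "Nn = int a + 44 * (int lam - int mu)"
  have NR: "real_of_int Nn = real_of_int z * w" using Nf unfolding Nn_def z_def Dl_def by simp
  show ?thesis
  proof (cases "z = 0")
    case True
    then have "Nn = 0" using NR by simp
    then have "int a = 44 * (int mu - int lam)" unfolding Nn_def by simp
    moreover have "int mu - int lam = 1"
    proof -
      have "int mu - int lam > 0" using \<open>int a = 44 * (int mu - int lam)\<close> a1 by presburger
      moreover have "int mu - int lam < 2" using \<open>int a = 44 * (int mu - int lam)\<close> a2 by presburger
      ultimately show ?thesis by simp
    qed
    ultimately have "a = 44" and "int lam = int mu - 1" by simp_all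
    then have "mu = 22" using srgi by simp
    then show ?thesis using \<open>a = 44\<close> \<open>int lam = int mu - 1\<close> by simp
  next
    case False
    define Di :: int where "Di = (int lam - int mu)^2 + 4 * (int a - int mu)"
    have DR: "Delta = real_of_int Di" unfolding Delta_def Di_def Dl_def by simp
    have "real_of_int (Nn * Nn) = real_of_int (z * z * Di)"
      using NR ss DR by (simp add: algebra_simps)
    then have NN: "Nn * Nn = z * z * Di" by (simp only: of_int_eq_iff)
    then have "z ^ 2 dvd Nn ^ 2" by (simp add: power2_eq_square)
    then have "z dvd Nn" by simp
    then obtain t where t: "Nn = z * t" by blast
    then have "z * z * (t * t) = z * z * Di" using NN by (simp add: algebra_simps)
    then have "t * t = Di" using False by simp
    then show ?thesis using int_case[of a mu lam t z] a1 a2 mua srgi t pr unfolding Di_def Nn_def by simp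
  qed
qed


lemma psd_ineq:
  assumes conf: "a = 44" "lam = 21" "mu = 22"
    and finY: "finite Y" and Ssub: "S \<subseteq> X \<times> Y"
    and dS: "\<And>x. x \<in> X \<Longrightarrow> card (S``{x}) = d"
    and Ma: "\<And>x x'. x \<in> X \<Longrightarrow> x' \<in> X \<Longrightarrow> (x,x') \<in> A \<Longrightarrow> card (S``{x} \<inter> S``{x'}) = al"
    and Mb: "\<And>x x'. x \<in> X \<Longrightarrow> x' \<in> X \<Longrightarrow> x \<noteq> x' \<Longrightarrow> (x,x') \<notin> A \<Longrightarrow> card (S``{x} \<inter> S``{x'}) = be"
    and ww: "w * w = 89"
  shows "(2 * real d - real al - real be) + w * (real al - real be) \<ge> 0"
proof -
  have ss: "w * w = Delta" using ww conf unfolding Delta_def Dl_def by simp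
  have w0: "w \<noteq> 0" using ww by auto
  let ?E = "Ef w"
  have P0: "(\<Sum>x\<in>X. \<Sum>x'\<in>X. real (card (S``{x} \<inter> S``{x'})) * ?E x x') \<ge> 0"
  proof -
    have "(\<Sum>x\<in>X. \<Sum>x'\<in>X. real (card (S``{x} \<inter> S``{x'})) * ?E x x')
        = (\<Sum>x\<in>X. \<Sum>x'\<in>X. \<Sum>y\<in>Y. of_bool ((x,y) \<in> S) * of_bool ((x',y) \<in> S) * ?E x x')"
    proof (intro sum.cong refl)
      fix x x' assume "x \<in> X" "x' \<in> X"
      have "Y \<inter> {y. (x,y) \<in> S \<and> (x',y) \<in> S} = S``{x} \<inter> S``{x'}" using Ssub by auto
      then have "real (card (S``{x} \<inter> S``{x'})) = (\<Sum>y\<in>Y. of_bool ((x,y) \<in> S) * of_bool ((x',y) \<in> S))"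
        using finY by (simp flip: of_bool_conj)
      then show "real (card (S``{x} \<inter> S``{x'})) * ?E x x' = (\<Sum>y\<in>Y. of_bool ((x,y) \<in> S) * of_bool ((x',y) \<in> S) * ?E x x')"
        by (simp add: sum_distrib_right)
    qed
    also have "\<dots> = (\<Sum>x\<in>X. \<Sum>y\<in>Y. \<Sum>x'\<in>X. of_bool ((x,y) \<in> S) * of_bool ((x',y) \<in> S) * ?E x x')"
      by (rule sum.cong[OF refl], rule sum.swap)
    also have "\<dots> = (\<Sum>y\<in>Y. \<Sum>x\<in>X. \<Sum>x'\<in>X. of_bool ((x,y) \<in> S) * of_bool ((x',y) \<in> S) * ?E x x')"
      by (rule sum.swap)
    also have "\<dots> \<ge> 0"
      by (intro sum_nonneg psd_gen[OF finX] Ef_sym Ef_idem[OF ss w0])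
    finally show ?thesis .
  qed
  have Mm: "real (card (S``{x} \<inter> S``{x'})) = m3 (real d - real be) (real al - real be) (real be) x x'"
    if "x \<in> X" "x' \<in> X" for x x'
    using that dS Ma Mb A_irr by (cases "x = x'"; cases "(x,x') \<in> A") (auto simp: m3_def)
  define e0 where "e0 = -((Dl - w)/2)/w"
  define e1 where "e1 = 1/w"
  define e2 where "e2 = -(real a - (Dl - w)/2)/(89*w)"
  have Ee: "?E = m3 e0 e1 e2" unfolding Ef_def e0_def e1_def e2_def by simp
  have "(\<Sum>x\<in>X. \<Sum>x'\<in>X. real (card (S``{x} \<inter> S``{x'})) * ?E x x')
      = (\<Sum>x\<in>X. \<Sum>x'\<in>X. m3 (real d - real be) (real al - real be) (real be) x x' * m3 e0 e1 e2 x' x)"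
    by (intro sum.cong refl) (simp add: Mm Ee[symmetric] Ef_sym)
  also have "\<dots> = (\<Sum>x\<in>X. (real d - real be)*e0 + (real al - real be)*e1*(real a - real mu)
       + ((real d - real be)*e2 + real be*e0 + (real al - real be)*e1*real mu + real a*(real al - real be)*e2
          + real a*real be*e1 + 89*real be*e2))"
  proof (intro sum.cong refl)
    fix x assume x: "x \<in> X"
    show "(\<Sum>x'\<in>X. m3 (real d - real be) (real al - real be) (real be) x x' * m3 e0 e1 e2 x' x) =
      (real d - real be)*e0 + (real al - real be)*e1*(real a - real mu)
       + ((real d - real be)*e2 + real be*e0 + (real al - real be)*e1*real mu + real a*(real al - real be)*e2
          + real a*real be*e1 + 89*real be*e2)"
      by (subst m3_mult[OF x x]) (simp add: m3_def A_irr)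
  qed
  also have "\<dots> = 89 * ((real d - real be)*e0 + (real al - real be)*e1*(real a - real mu)
       + ((real d - real be)*e2 + real be*e0 + (real al - real be)*e1*real mu + real a*(real al - real be)*e2
          + real a*real be*e1 + 89*real be*e2))"
    using cardX by simp
  also have "\<dots> = 22 * ((2 * real d - real al - real be) + w * (real al - real be))"
  proof -
    have iw: "1 / w = w / 89" using w0 ww by (simp add: field_simps)
    have E0: "e0 = 1/2 + w/178" unfolding e0_def Dl_def unfolding conf
      using iw w0 by (simp add: field_simps)
    have E1: "e1 = w/89" unfolding e1_def using iw by simp
    have E2: "e2 = - w/178 - 1/178" unfolding e2_def Dl_def unfolding conf
      using iw w0 by (simp add: field_simps)
    show ?thesis unfolding E0 E1 E2 conf using ww by (simp add: algebra_simps) (simp add: field_simps)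
  qed
  finally show ?thesis using P0 by simp
qed

end



lemma arith_sq:
  fixes u v :: real
  assumes "u + sqrt 89 * v \<ge> 0" "u - sqrt 89 * v \<ge> 0"
  shows "u^2 \<ge> 89 * v^2"
proof -
  have s: "sqrt 89 * sqrt 89 = (89::real)" by simp
  have "u \<ge> \<bar>sqrt 89 * v\<bar>" using assms by linarith
  then have "\<bar>sqrt 89 * v\<bar>^2 \<le> u^2" by (intro power_mono) auto
  then have "u^2 \<ge> (sqrt 89 * v)^2" by simp
  also have "(sqrt 89 * v)^2 = 89 * v^2" by (simp add: power_mult_distrib)
  finally show ?thesis .
qed

lemma arith_d:
  fixes d al be p q :: nat
  assumes h1: "d + 44*al + 44*be = d*d" and h2: "44*al = p*d" and h3: "44*be = q*d"
    and d2: "2 \<le> d" and d88: "d \<le> 88"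
    and sq: "(2*int d - int al - int be)^2 \<ge> 89 * (int al - int be)^2"
  shows "11 dvd d"
proof (rule ccontr)
  assume n11: "\<not> 11 dvd d"
  have "d = 2 \<or> d = 3 \<or> d = 4 \<or> d = 5 \<or> d = 6 \<or> d = 7 \<or> d = 8 \<or> d = 9 \<or> d = 10 \<or> d = 11 \<or> d = 12 \<or> d = 13 \<or> d = 14 \<or> d = 15 \<or> d = 16 \<or> d = 17 \<or> d = 18 \<or> d = 19 \<or> d = 20 \<or> d = 21 \<or> d = 22 \<or> d = 23 \<or> d = 24 \<or> d = 25 \<or> d = 26 \<or> d = 27 \<or> d = 28 \<or> d = 29 \<or> d = 30 \<or> d = 31 \<or> d = 32 \<or> d = 33 \<or> d = 34 \<or> d = 35 \<or> d = 36 \<or> d = 37 \<or> d = 38 \<or> d = 39 \<or> d = 40 \<or> d = 41 \<or> d = 42 \<or> d = 43 \<or> d = 44 \<or> d = 45 \<or> d = 46 \<or> d = 47 \<or> d = 48 \<or> d = 49 \<or> d = 50 \<or> d = 51 \<or> d = 52 \<or> d = 53 \<or> d = 54 \<or> d = 55 \<or> d = 56 \<or> d = 57 \<or> d = 58 \<or> d = 59 \<or> d = 60 \<or> d = 61 \<or> d = 62 \<or> d = 63 \<or> d = 64 \<or> d = 65 \<or> d = 66 \<or> d = 67 \<or> d = 68 \<or> d = 69 \<or> d = 70 \<or> d = 71 \<or> d = 72 \<or> d = 73 \<or> d = 74 \<or> d = 75 \<or> d = 76 \<or> d = 77 \<or> d = 78 \<or> d = 79 \<or> d = 80 \<or> d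 = 81 \<or> d = 82 \<or> d = 83 \<or> d = 84 \<or> d = 85 \<or> d = 86 \<or> d = 87 \<or> d = 88" using d2 d88 by presburger
  then have "d = 12 \<or> d = 45 \<or> d = 56" using h1 n11 by (elim disjE; simp; presburger)
  moreover have False if "d = 12"
  proof -
    have "al + be = 3" using h1 that by simp
    then have "al = 0 \<or> al = 1 \<or> al = 2 \<or> al = 3" by presburger
    then show False using h2 sq \<open>al + be = 3\<close> that
      by (elim disjE; simp add: power2_eq_square; presburger)
  qed
  moreover have False if "d = 45"
  proof -
    have "al + be = 45" using h1 that by simp
    then have "al = 0 \<or> al = 1 \<or> al = 2 \<or> al = 3 \<or> al = 4 \<or> al = 5 \<or> al = 6 \<or> al = 7 \<or> al = 8 \<or> al = 9 \<or> al = 10 \<or> al = 11 \<or> al = 12 \<or> al = 13 \<or> al = 14 \<or> al = 15 \<or> al = 16 \<or> al = 17 \<or> al = 18 \<or> al = 19 \<or> al = 20 \<or> al = 21 \<or> al = 22 \<or> al = 23 \<or> al = 24 \<or> al = 25 \<or> al = 26 \<or> al = 27 \<or> al = 28 \<or> al = 29 \<or> al = 30 \<or> al = 31 \<or> al = 32 \<or> al = 33 \<or> al = 34 \<or> al = 35 \<or> al = 36 \<or> al = 37 \<or> al = 38 \<or> al = 39 \<or> al = 40 \<or> al = 41 \<or> al = 42 \<or> al = 43 \<or> al = 44 \<or> al = 45" by presburger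
    then show False using h2 sq \<open>al + be = 45\<close> that
      by (elim disjE; simp add: power2_eq_square; presburger)
  qed
  moreover have False if "d = 56"
  proof -
    have "al + be = 70" using h1 that by simp
    then have "al = 0 \<or> al = 1 \<or> al = 2 \<or> al = 3 \<or> al = 4 \<or> al = 5 \<or> al = 6 \<or> al = 7 \<or> al = 8 \<or> al = 9 \<or> al = 10 \<or> al = 11 \<or> al = 12 \<or> al = 13 \<or> al = 14 \<or> al = 15 \<or> al = 16 \<or> al = 17 \<or> al = 18 \<or> al = 19 \<or> al = 20 \<or> al = 21 \<or> al = 22 \<or> al = 23 \<or> al = 24 \<or> al = 25 \<or> al = 26 \<or> al = 27 \<or> al = 28 \<or> al = 29 \<or> al = 30 \<or> al = 31 \<or> al = 32 \<or> al = 33 \<or> al = 34 \<or> al = 35 \<or> al = 36 \<or> al = 37 \<or> al = 38 \<or> al = 39 \<or> al = 40 \<or> al = 41 \<or> al = 42 \<or> al = 43 \<or> al = 44 \<or> al = 45 \<or> al = 46 \<or> al = 47 \<or> al = 48 \<or> al = 49 \<or> al = 50 \<or> al = 51 \<or> al = 52 \<or> al = 53 \<or> al = 54 \<or> al = 55 \<or> al = 56 \<or> al = 57 \<or> al = 58 \<or> al = 59 \<or> al = 60 \<or> al = 61 \<or> al = 62 \<or> al = 63 \<or> al = 64 \<or> al = 65 \<or> al = 66 \<or> al = 67 \<or> al = 68 \<or> al = 69 \<or> al = 70" by presburger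
    then show False using h2 sq \<open>al + be = 70\<close> that
      by (elim disjE; simp add: power2_eq_square; presburger)
  qed
  ultimately show False by blast
qed



context
  fixes V :: "'a set" and RR :: "('a \<times> 'a) set set"
  assumes cc: "coherent_configuration V RR"
begin

lemma cc_fin: "finite V" using cc unfolding coherent_configuration_def by (elim conjE)
lemma cc_part: "partition_on (V \<times> V) RR" using cc unfolding coherent_configuration_def by (elim conjE)
lemma cc_sub: "T \<in> RR \<Longrightarrow> T \<subseteq> V \<times> V" using partition_onD1[OF cc_part] by blast
lemma cc_ne: "T \<in> RR \<Longrightarrow> T \<noteq> {}" using partition_onD3[OF cc_part] by blast
lemma cc_disj: "T \<in> RR \<Longrightarrow> T' \<in> RR \<Longrightarrow> T \<noteq> T' \<Longrightarrow> T \<inter> T' = {}"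
  using partition_onD2[OF cc_part] by (simp add: disjointD)
lemma cc_cover: "u \<in> V \<Longrightarrow> v \<in> V \<Longrightarrow> \<exists>T\<in>RR. (u,v) \<in> T"
  using partition_onD1[OF cc_part] by blast
lemma cc_conv: "T \<in> RR \<Longrightarrow> T\<inverse> \<in> RR"
proof -
  have "\<forall>S\<in>RR. S\<inverse> \<in> RR" using cc unfolding coherent_configuration_def by (elim conjE)
  then show "T \<in> RR \<Longrightarrow> T\<inverse> \<in> RR" by blast
qed
lemma cc_int:
  assumes "R1 \<in> RR" "R2 \<in> RR" "T \<in> RR" "(u,v) \<in> T" "(u',v') \<in> T"
  shows "card (R1``{u} \<inter> R2\<inverse>``{v}) = card (R1``{u'} \<inter> R2\<inverse>``{v'})"
proof -
  have all: "\<forall>R\<in>RR. \<forall>S\<in>RR. \<forall>T\<in>RR. \<exists>c::nat. \<forall>(u,v)\<in>T.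
        card (R `` {u} \<inter> (S\<inverse>) `` {v}) = c"
    using cc unfolding coherent_configuration_def by (elim conjE) assumption
  obtain c where c: "\<forall>(u,v)\<in>T. card (R1 `` {u} \<inter> (R2\<inverse>) `` {v}) = c"
    using all[rule_format, OF assms(1) assms(2) assms(3)] by blast
  have "card (R1 `` {u} \<inter> (R2\<inverse>) `` {v}) = c" using bspec[OF c assms(4)] by simp
  moreover have "card (R1 `` {u'} \<inter> (R2\<inverse>) `` {v'}) = c" using bspec[OF c assms(5)] by simp
  ultimately show ?thesis by simp
qed

lemma fiber_sub: "fiber RR X \<Longrightarrow> X \<subseteq> V"
  unfolding fiber_def using cc_sub by (auto simp: Id_on_def)

lemma cc_reg:
  assumes X: "fiber RR X" and T: "T \<in> RR" and x: "x \<in> X" and x': "x' \<in> X"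
  shows "card (T``{x}) = card (T``{x'})"
proof -
  have "card (T``{x} \<inter> (T\<inverse>)\<inverse>``{x}) = card (T``{x'} \<inter> (T\<inverse>)\<inverse>``{x'})"
    by (rule cc_int[OF T cc_conv[OF T] X[unfolded fiber_def]]) (use x x' in auto)
  then show ?thesis by simp
qed

lemma cc_block:
  assumes X: "fiber RR X" and Y: "fiber RR Y" and T: "T \<in> RR"
    and xy: "(x,y) \<in> T" and x: "x \<in> X" and y: "y \<in> Y"
  shows "T \<subseteq> X \<times> Y"
proof
  fix p assume p: "p \<in> T"
  obtain u v where uv: "p = (u,v)" by (cases p)
  have IX: "Id_on X \<in> RR" and IY: "Id_on Y \<in> RR" using X Y unfolding fiber_def by auto
  have "card (Id_on X``{u} \<inter> T\<inverse>``{v}) = card (Id_on X``{x} \<inter> T\<inverse>``{y})"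
    by (rule cc_int[OF IX T T]) (use p uv xy in auto)
  also have "Id_on X``{x} \<inter> T\<inverse>``{y} = {x}" using x xy by auto
  finally have cu: "card (Id_on X``{u} \<inter> T\<inverse>``{v}) = 1" by simp
  have "u \<in> X"
  proof (rule ccontr)
    assume "u \<notin> X"
    then have "Id_on X``{u} = {}" by auto
    then show False using cu by simp
  qed
  have "card (T``{u} \<inter> (Id_on Y)\<inverse>``{v}) = card (T``{x} \<inter> (Id_on Y)\<inverse>``{y})"
    by (rule cc_int[OF T IY T]) (use p uv xy in auto)
  also have "T``{x} \<inter> (Id_on Y)\<inverse>``{y} = {y}" using y xy by auto
  finally have cv: "card (T``{u} \<inter> (Id_on Y)\<inverse>``{v}) = 1" by simp
  have "v \<in> Y"
  proof (rule ccontr)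
    assume "v \<notin> Y"
    then have "(Id_on Y)\<inverse>``{v} = {}" by auto
    then show False using cv by simp
  qed
  show "p \<in> X \<times> Y" using uv \<open>u \<in> X\<close> \<open>v \<in> Y\<close> by simp
qed

lemma valency_eq:
  assumes X: "fiber RR X" and S: "S \<in> RR" and x: "x \<in> X"
  shows "valency X S = card (S``{x})"
proof -
  have "\<exists>p. p \<in> Id_on X" using x by auto
  then have "(SOME p. p \<in> Id_on X) \<in> Id_on X" by (rule someI_ex)
  then obtain u where u: "(SOME p. p \<in> Id_on X) = (u,u)" "u \<in> X" by (auto simp: Id_on_def)
  have "valency X S = card (S``{u})"
    unfolding valency_def intersection_number_def u(1) by simp
  also have "\<dots> = card (S``{x})" by (rule cc_reg[OF X S u(2) x])
  finally show ?thesis .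
qed

end

lemma rel_card:
  assumes "T \<subseteq> X \<times> Z" "finite X" "finite Z"
  shows "card T = (\<Sum>x\<in>X. card (T``{x}))"
proof -
  have "T = Sigma X (\<lambda>x. T``{x})" using assms(1) by auto
  moreover have "finite (T``{x})" for x using assms finite_subset[of "T``{x}" Z] by auto
  ultimately show ?thesis using assms(2) by (metis card_SigmaI)
qed

lemma dcount:
  assumes "finite F" "finite G"
  shows "(\<Sum>x\<in>F. card (G \<inter> S``{x})) = (\<Sum>y\<in>G. card (F \<inter> S\<inverse>``{y}))"
proof -
  have 1: "card (G \<inter> S``{x}) = (\<Sum>y\<in>G. of_bool ((x,y) \<in> S))" for x
  proof -
    have "G \<inter> S``{x} = G \<inter> {y. (x,y) \<in> S}" by auto
    then show ?thesis using assms(2) by simp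
  qed
  have 2: "card (F \<inter> S\<inverse>``{y}) = (\<Sum>x\<in>F. of_bool ((x,y) \<in> S))" for y
  proof -
    have "F \<inter> S\<inverse>``{y} = F \<inter> {x. (x,y) \<in> S}" by auto
    then show ?thesis using assms(1) by simp
  qed
  show ?thesis unfolding 1 2 by (rule sum.swap)
qed



theorem proposition4p4:
  fixes V :: "'a set" and \<R> :: "('a \<times> 'a) set set" and X Y :: "'a set"
    and m r :: nat and k :: real
  assumes "coherent_configuration V \<R>"
    and "fiber \<R> X" and "fiber \<R> Y"
    and "m = card X" and "m = card Y" and "prime m"
    and "r = card (rels_between \<R> X X)" and "r > 2"
    and "card (rels_between \<R> X Y) > 1"
    and "k = (real m - 1) / (real r - 1)"
    and "k = 44" and "m = 89"
  shows "1 \<in> {valency X S | S. S \<in> rels_between \<R> X Y}"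
proof -
  note cc = assms(1)
  have cX: "card X = 89" and cY: "card Y = 89" using assms by auto
  have pr89: "prime (89::nat)" using assms by simp
  have pri: "prime (89::int)" using pr89 by (metis of_nat_numeral prime_nat_int_transfer)
  have r3: "r = 3"
  proof -
    have r1: "real r - 1 > 0" using assms(8) by simp
    have "88 / (real r - 1) = 44" using assms(10,11,12) by simp
    then have "88 = 44 * (real r - 1)" using r1 by (simp add: field_simps)
    then have "real r = 3" by simp
    then show ?thesis by simp
  qed
  have fX: "fiber \<R> X" and fY: "fiber \<R> Y" using assms by auto
  have IX: "Id_on X \<in> \<R>" using fX unfolding fiber_def .
  have finX: "finite X" and finY: "finite Y" using cX cY card.infinite by force+
  have XV: "X \<subseteq> V" and YV: "Y \<subseteq> V" using fiber_sub[OF cc] fX fY by auto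
  define RX where "RX = rels_between \<R> X X"
  have cRX: "card RX = 3" using r3 assms(7) unfolding RX_def by simp
  have finRX: "finite RX" using cRX card.infinite by force
  have IdRX: "Id_on X \<in> RX" unfolding RX_def rels_between_def using IX by auto
  have "card (RX - {Id_on X}) = 2" using cRX IdRX finRX by (simp add: card_Diff_singleton)
  then obtain A B where AB: "RX - {Id_on X} = {A,B}" "A \<noteq> B" by (auto simp: card_2_iff)
  have Ain: "A \<in> RX" "A \<noteq> Id_on X" and Bin: "B \<in> RX" "B \<noteq> Id_on X" using AB(1) by blast+
  have AR: "A \<in> \<R>" "A \<subseteq> X \<times> X" "A \<noteq> Id_on X" using Ain unfolding RX_def rels_between_def by simp_all
  have BR: "B \<in> \<R>" "B \<subseteq> X \<times> X" "B \<noteq> Id_on X" using Bin unfolding RX_def rels_between_def by simp_all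
  have RXeq: "RX = {Id_on X, A, B}" using AB IdRX by blast
  have toRX: "T \<in> RX" if "T \<in> \<R>" "(x,x') \<in> T" "x \<in> X" "x' \<in> X" for T x x'
    using cc_block[OF cc fX fX that(1,2,3,4)] that(1) unfolding RX_def rels_between_def by simp
  have cover: "x = x' \<or> (x,x') \<in> A \<or> (x,x') \<in> B" if xx: "x \<in> X" "x' \<in> X" for x x'
  proof -
    obtain T where T: "T \<in> \<R>" "(x,x') \<in> T" using cc_cover[OF cc] xx XV by blast
    then have "T \<in> RX" using toRX xx by blast
    then show ?thesis using T RXeq by auto
  qed
  have dIA: "A \<inter> Id_on X = {}" using cc_disj[OF cc AR(1) IX AR(3)] .
  have dIB: "B \<inter> Id_on X = {}" using cc_disj[OF cc BR(1) IX BR(3)] .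
  have dAB: "A \<inter> B = {}" using cc_disj[OF cc AR(1) BR(1) AB(2)] .
  have irrA: "(x,x) \<notin> A" for x using dIA AR(2) by auto
  have irrB: "(x,x) \<notin> B" for x using dIB BR(2) by auto
  obtain x0 where x0: "x0 \<in> X" using cX by (metis card.empty ex_in_conv zero_neq_numeral)
  define a where "a = card (A``{x0})"
  define b where "b = card (B``{x0})"
  have aval: "card (A``{x}) = a" if "x \<in> X" for x unfolding a_def by (rule cc_reg[OF cc fX AR(1) that x0])
  have bval: "card (B``{x}) = b" if "x \<in> X" for x unfolding b_def by (rule cc_reg[OF cc fX BR(1) that x0])
  have AxX: "A``{x} \<subseteq> X" for x using AR(2) by auto
  have BxX: "B``{x} \<subseteq> X" for x using BR(2) by auto
  have Xsplit: "X = insert x (A``{x} \<union> B``{x})" if "x \<in> X" for x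
    using cover[OF that] that AxX BxX by blast
  have xnot: "x \<notin> A``{x} \<union> B``{x}" for x using irrA irrB by auto
  have ABdisj: "A``{x} \<inter> B``{x} = {}" for x using dAB by auto
  have finAx: "finite (A``{x})" for x by (rule finite_subset[OF AxX finX])
  have finBx: "finite (B``{x})" for x by (rule finite_subset[OF BxX finX])
  have sumsplit: "(\<Sum>x'\<in>X. f x') = f x + (\<Sum>x'\<in>A``{x}. f x') + (\<Sum>x'\<in>B``{x}. f x')"
    if "x \<in> X" for x and f :: "'a \<Rightarrow> nat"
  proof -
    have "(\<Sum>x'\<in>X. f x') = (\<Sum>x'\<in>insert x (A``{x} \<union> B``{x}). f x')" using Xsplit[OF that] by simp
    also have "\<dots> = f x + (\<Sum>x'\<in>A``{x} \<union> B``{x}. f x')"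
      using xnot finAx finBx by (simp add: sum.insert)
    also have "\<dots> = f x + (\<Sum>x'\<in>A``{x}. f x') + (\<Sum>x'\<in>B``{x}. f x')"
      using ABdisj finAx finBx by (simp add: sum.union_disjoint)
    finally show ?thesis .
  qed
  have ab: "1 + a + b = 89"
  proof -
    have "card X = card (insert x0 (A``{x0} \<union> B``{x0}))" using Xsplit[OF x0] by simp
    also have "\<dots> = 1 + a + b" using xnot ABdisj finAx finBx unfolding a_def b_def
      by (simp add: card_Un_disjoint)
    finally show ?thesis using cX by simp
  qed
  obtain u0 v0 where uv0: "(u0,v0) \<in> A" using cc_ne[OF cc AR(1)] by auto
  obtain u1 v1 where uv1: "(u1,v1) \<in> B" using cc_ne[OF cc BR(1)] by auto
  have u0X: "u0 \<in> X" "v0 \<in> X" and u1X: "u1 \<in> X" "v1 \<in> X" using uv0 uv1 AR(2) BR(2) by auto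
  have a1: "a \<ge> 1"
  proof -
    have "v0 \<in> A``{u0}" using uv0 by simp
    then have "card (A``{u0}) \<ge> 1" using finAx by (metis One_nat_def Suc_leI card_gt_0_iff empty_iff)
    then show ?thesis using aval[OF u0X(1)] by simp
  qed
  have b1: "b \<ge> 1"
  proof -
    have "v1 \<in> B``{u1}" using uv1 by simp
    then have "card (B``{u1}) \<ge> 1" using finBx by (metis One_nat_def Suc_leI card_gt_0_iff empty_iff)
    then show ?thesis using bval[OF u1X(1)] by simp
  qed
  have cardA: "card A = 89 * a"
    using rel_card[OF AR(2) finX finX] aval cX by simp
  have cardB: "card B = 89 * b"
    using rel_card[OF BR(2) finX finX] bval cX by simp
  have AcRX: "A\<inverse> \<in> RX" using cc_conv[OF cc AR(1)] AR(2) unfolding RX_def rels_between_def by auto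
  have "A\<inverse> \<noteq> Id_on X" using AR(3) by (metis converse_Id_on converse_converse)
  then have AcAB: "A\<inverse> = A \<or> A\<inverse> = B" using AcRX RXeq by auto
  have Asym: "A\<inverse> = A"
  proof (rule ccontr)
    assume "A\<inverse> \<noteq> A"
    then have AB': "A\<inverse> = B" using AcAB by simp
    have "card B = card A" using AB' by (metis card_inverse)
    then have a44: "a = 44" using cardA cardB ab by simp
    define xc where "xc = card (A``{u0} \<inter> A``{v0})"
    have xcA: "card (A``{x} \<inter> A``{x'}) = xc" if "(x,x') \<in> A" for x x'
    proof -
      have "card (A``{x} \<inter> (A\<inverse>)\<inverse>``{x'}) = card (A``{u0} \<inter> (A\<inverse>)\<inverse>``{v0})"
        by (rule cc_int[OF cc AR(1) cc_conv[OF cc AR(1)] AR(1) that uv0])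
      then show ?thesis unfolding xc_def by simp
    qed
    have xcB: "card (A``{x} \<inter> A``{x'}) = xc" if "(x,x') \<in> B" for x x'
    proof -
      have vu: "(v0,u0) \<in> B" using uv0 AB' by auto
      have "card (A``{x} \<inter> (A\<inverse>)\<inverse>``{x'}) = card (A``{v0} \<inter> (A\<inverse>)\<inverse>``{u0})"
        by (rule cc_int[OF cc AR(1) cc_conv[OF cc AR(1)] BR(1) that vu])
      then show ?thesis unfolding xc_def by (simp add: Int_commute)
    qed
    have "(\<Sum>x'\<in>X. card (A``{x0} \<inter> A``{x'})) = (\<Sum>z\<in>A``{x0}. card (X \<inter> A\<inverse>``{z}))"
      by (rule dcount[OF finX finAx])
    also have "\<dots> = (\<Sum>z\<in>A``{x0}. 44)"
    proof (intro sum.cong refl)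
      fix z assume "z \<in> A``{x0}"
      then have zX: "z \<in> X" using AxX by blast
      have "X \<inter> A\<inverse>``{z} = B``{z}" using AB' BxX by auto
      then show "card (X \<inter> A\<inverse>``{z}) = 44" using bval[OF zX] ab a44 by simp
    qed
    also have "\<dots> = 44 * 44" using aval[OF x0] a44 by simp
    finally have 1: "(\<Sum>x'\<in>X. card (A``{x0} \<inter> A``{x'})) = 44 * 44" .
    have "(\<Sum>x'\<in>X. card (A``{x0} \<inter> A``{x'})) = a + (\<Sum>x'\<in>A``{x0}. xc) + (\<Sum>x'\<in>B``{x0}. xc)"
      unfolding sumsplit[OF x0] using aval[OF x0] xcA xcB by simp
    also have "\<dots> = 44 + 88 * xc" using aval[OF x0] bval[OF x0] a44 ab by simp
    finally show False using 1 by presburger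
  qed
  define lam where "lam = card (A``{u0} \<inter> A``{v0})"
  define mu where "mu = card (A``{u1} \<inter> A``{v1})"
  have Kc: "card (A``{x} \<inter> A``{x'}) = card (A``{x''} \<inter> A``{x'''})"
    if "T \<in> \<R>" "(x,x') \<in> T" "(x'',x''') \<in> T" for T x x' x'' x'''
  proof -
    have "card (A``{x} \<inter> A\<inverse>``{x'}) = card (A``{x''} \<inter> A\<inverse>``{x'''})"
      by (rule cc_int[OF cc AR(1) AR(1) that])
    then show ?thesis using Asym by simp
  qed
  have K: "card (A``{x} \<inter> A``{x'}) = (if (x,x') \<in> A then lam else mu)"
    if "x \<in> X" "x' \<in> X" "x \<noteq> x'" for x x'
  proof (cases "(x,x') \<in> A")
    case True then show ?thesis using Kc[OF AR(1) True uv0] unfolding lam_def by simp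
  next
    case False
    then have "(x,x') \<in> B" using cover[OF that(1,2)] that(3) by auto
    then show ?thesis using Kc[OF BR(1) _ uv1] False unfolding mu_def by simp
  qed
  have mua: "mu \<le> a"
  proof -
    have "mu \<le> card (A``{u1})" unfolding mu_def using finAx by (intro card_mono) auto
    then show ?thesis using aval[OF u1X(1)] by simp
  qed
  have A_sym: "(y,x) \<in> A" if "(x,y) \<in> A" for x y using that Asym by (metis converseI)
  interpret S: srgX X A a lam mu
    by (unfold_locales) (use finX cX AR(2) A_sym irrA aval K in auto)
  have conf: "a = 44" "lam = 21" "mu = 22" using S.conference[OF a1 _ mua pri] ab b1 by auto
  have b44: "b = 44" using ab conf by simp
  define RXY where "RXY = rels_between \<R> X Y"
  have perS: "card (S``{x0}) = 1 \<or> 11 dvd card (S``{x0}) \<or> card (S``{x0}) = 89" if SR: "S \<in> RXY" for S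
  proof -
    have SR1: "S \<in> \<R>" and Ssub: "S \<subseteq> X \<times> Y" using SR unfolding RXY_def rels_between_def by auto
    have ScR: "S\<inverse> \<in> \<R>" using cc_conv[OF cc SR1] .
    define d where "d = card (S``{x0})"
    have dreg: "card (S``{x}) = d" if "x \<in> X" for x unfolding d_def by (rule cc_reg[OF cc fX SR1 that x0])
    obtain y0 where y0: "y0 \<in> Y" using cY by (metis card.empty ex_in_conv zero_neq_numeral)
    define d' where "d' = card (S\<inverse>``{y0})"
    have d'reg: "card (S\<inverse>``{y}) = d'" if "y \<in> Y" for y unfolding d'_def by (rule cc_reg[OF cc fY ScR that y0])
    have "card S = 89 * d" using rel_card[OF Ssub finX finY] dreg cX by simp
    moreover have "card (S\<inverse>) = 89 * d'"
    proof -
      have "S\<inverse> \<subseteq> Y \<times> X" using Ssub by auto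
      then have "card (S\<inverse>) = (\<Sum>y\<in>Y. card (S\<inverse>``{y}))" by (rule rel_card[OF _ finY finX])
      also have "\<dots> = (\<Sum>y\<in>Y. d')" by (intro sum.cong refl) (rule d'reg)
      finally show ?thesis using cY by simp
    qed
    ultimately have dd': "d' = d" by (simp add: card_inverse)
    have SxY: "S``{x} \<subseteq> Y" for x using Ssub by auto
    have finSx: "finite (S``{x})" for x by (rule finite_subset[OF SxY finY])
    have d89: "d \<le> 89" unfolding d_def using card_mono[OF finY SxY] cY by simp
    obtain s0 t0 where st0: "(s0,t0) \<in> S" using cc_ne[OF cc SR1] by auto
    have s0X: "s0 \<in> X" using st0 Ssub by auto
    have d1: "d \<ge> 1"
    proof -
      have "t0 \<in> S``{s0}" using st0 by simp
      then have "card (S``{s0}) \<ge> 1" using finSx by (metis One_nat_def Suc_leI card_gt_0_iff empty_iff)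
      then show ?thesis using dreg[OF s0X] by simp
    qed
    define al where "al = card (S``{u0} \<inter> S``{v0})"
    define be where "be = card (S``{u1} \<inter> S``{v1})"
    have Sc: "card (S``{x} \<inter> S``{x'}) = card (S``{x''} \<inter> S``{x'''})"
      if "T \<in> \<R>" "(x,x') \<in> T" "(x'',x''') \<in> T" for T x x' x'' x'''
    proof -
      have "card (S``{x} \<inter> (S\<inverse>)\<inverse>``{x'}) = card (S``{x''} \<inter> (S\<inverse>)\<inverse>``{x'''})"
        by (rule cc_int[OF cc SR1 ScR that])
      then show ?thesis by simp
    qed
    have Ma: "card (S``{x} \<inter> S``{x'}) = al" if "(x,x') \<in> A" for x x'
      using Sc[OF AR(1) that uv0] unfolding al_def .
    have Mb': "card (S``{x} \<inter> S``{x'}) = be" if "(x,x') \<in> B" for x x'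
      using Sc[OF BR(1) that uv1] unfolding be_def .
    have Mb: "card (S``{x} \<inter> S``{x'}) = be" if "x \<in> X" "x' \<in> X" "x \<noteq> x'" "(x,x') \<notin> A" for x x'
      using cover[OF that(1,2)] that(3,4) Mb' by auto
    define p where "p = card (A``{s0} \<inter> S\<inverse>``{t0})"
    define q where "q = card (B``{s0} \<inter> S\<inverse>``{t0})"
    have pS: "card (A``{x} \<inter> S\<inverse>``{y}) = p" if "(x,y) \<in> S" for x y
      unfolding p_def by (rule cc_int[OF cc AR(1) SR1 SR1 that st0])
    have qS: "card (B``{x} \<inter> S\<inverse>``{y}) = q" if "(x,y) \<in> S" for x y
      unfolding q_def by (rule cc_int[OF cc BR(1) SR1 SR1 that st0])
    have rs1: "(\<Sum>x'\<in>X. card (S``{x0} \<inter> S``{x'})) = d * d"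
    proof -
      have "(\<Sum>x'\<in>X. card (S``{x0} \<inter> S``{x'})) = (\<Sum>y\<in>S``{x0}. card (X \<inter> S\<inverse>``{y}))"
        by (rule dcount[OF finX finSx])
      also have "\<dots> = (\<Sum>y\<in>S``{x0}. d)"
      proof (intro sum.cong refl)
        fix y assume "y \<in> S``{x0}"
        then have yY: "y \<in> Y" using SxY by blast
        have "X \<inter> S\<inverse>``{y} = S\<inverse>``{y}" using Ssub by auto
        then show "card (X \<inter> S\<inverse>``{y}) = d" using d'reg[OF yY] dd' by simp
      qed
      also have "\<dots> = d * d" using dreg[OF x0] by simp
      finally show ?thesis .
    qed
    have rs2: "(\<Sum>x'\<in>X. card (S``{x0} \<inter> S``{x'})) = d + 44 * al + 44 * be"
    proof -
      have "(\<Sum>x'\<in>X. card (S``{x0} \<inter> S``{x'})) = card (S``{x0}) + (\<Sum>x'\<in>A``{x0}. al) + (\<Sum>x'\<in>B``{x0}. be)"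
        unfolding sumsplit[OF x0] using Ma Mb' by simp
      then show ?thesis using aval[OF x0] bval[OF x0] conf b44 dreg[OF x0] by simp
    qed
    have pd: "44 * al = p * d"
    proof -
      have "(\<Sum>x'\<in>A``{x0}. card (S``{x0} \<inter> S``{x'})) = (\<Sum>y\<in>S``{x0}. card (A``{x0} \<inter> S\<inverse>``{y}))"
        by (rule dcount[OF finAx finSx])
      also have "\<dots> = (\<Sum>y\<in>S``{x0}. p)" by (intro sum.cong refl) (simp add: pS)
      finally have "(\<Sum>x'\<in>A``{x0}. card (S``{x0} \<inter> S``{x'})) = p * d" using dreg[OF x0] by simp
      moreover have "(\<Sum>x'\<in>A``{x0}. card (S``{x0} \<inter> S``{x'})) = 44 * al"
        using Ma aval[OF x0] conf by simp
      ultimately show ?thesis by simp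
    qed
    have qd: "44 * be = q * d"
    proof -
      have "(\<Sum>x'\<in>B``{x0}. card (S``{x0} \<inter> S``{x'})) = (\<Sum>y\<in>S``{x0}. card (B``{x0} \<inter> S\<inverse>``{y}))"
        by (rule dcount[OF finBx finSx])
      also have "\<dots> = (\<Sum>y\<in>S``{x0}. q)" by (intro sum.cong refl) (simp add: qS)
      finally have "(\<Sum>x'\<in>B``{x0}. card (S``{x0} \<inter> S``{x'})) = q * d" using dreg[OF x0] by simp
      moreover have "(\<Sum>x'\<in>B``{x0}. card (S``{x0} \<inter> S``{x'})) = 44 * be"
        using Mb' bval[OF x0] b44 by simp
      ultimately show ?thesis by simp
    qed
    have Ma2: "card (S``{x} \<inter> S``{x'}) = al" if "x \<in> X" "x' \<in> X" "(x,x') \<in> A" for x x'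
      using Ma that(3) .
    have i1: "(2 * real d - real al - real be) + sqrt 89 * (real al - real be) \<ge> 0"
      by (rule S.psd_ineq[OF conf finY Ssub dreg Ma2 Mb]) simp_all
    have i2: "(2 * real d - real al - real be) + (- sqrt 89) * (real al - real be) \<ge> 0"
      by (rule S.psd_ineq[OF conf finY Ssub dreg Ma2 Mb]) simp_all
    have "(2 * real d - real al - real be)^2 \<ge> 89 * (real al - real be)^2"
      using arith_sq[of "2 * real d - real al - real be" "real al - real be"] i1 i2 by simp
    then have sqi: "(2 * int d - int al - int be)^2 \<ge> 89 * (int al - int be)^2"
    proof -
      assume h: "(2 * real d - real al - real be)^2 \<ge> 89 * (real al - real be)^2"
      have "real_of_int ((2 * int d - int al - int be)^2) \<ge> real_of_int (89 * (int al - int be)^2)"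
        using h by simp
      then show ?thesis by (simp only: of_int_le_iff)
    qed
    have "d + 44 * al + 44 * be = d * d" using rs1 rs2 by simp
    then have "d = 1 \<or> 11 dvd d \<or> d = 89"
      using arith_d[of d al be p q] pd qd sqi d1 d89 by (cases "2 \<le> d \<and> d \<le> 88") auto
    then show ?thesis unfolding d_def .
  qed
  have finRXY: "finite RXY" using assms(9) card.infinite unfolding RXY_def by force
  have Ydecomp: "Y = (\<Union>S\<in>RXY. S``{x0})"
  proof
    show "Y \<subseteq> (\<Union>S\<in>RXY. S``{x0})"
    proof
      fix y assume y: "y \<in> Y"
      obtain T where T: "T \<in> \<R>" "(x0,y) \<in> T" using cc_cover[OF cc] x0 y XV YV by blast
      then have "T \<subseteq> X \<times> Y" using cc_block[OF cc fX fY T(1,2) x0 y] by simp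
      then have "T \<in> RXY" using T unfolding RXY_def rels_between_def by simp
      then show "y \<in> (\<Union>S\<in>RXY. S``{x0})" using T by blast
    qed
    show "(\<Union>S\<in>RXY. S``{x0}) \<subseteq> Y" unfolding RXY_def rels_between_def by auto
  qed
  have RXYsub: "S \<in> \<R>" "S \<subseteq> X \<times> Y" if "S \<in> RXY" for S using that unfolding RXY_def rels_between_def by auto
  have sum89: "(\<Sum>S\<in>RXY. card (S``{x0})) = 89"
  proof -
    have "card (\<Union>S\<in>RXY. S``{x0}) = (\<Sum>S\<in>RXY. card (S``{x0}))"
    proof (rule card_UN_disjoint[OF finRXY])
      show "\<forall>S\<in>RXY. finite (S``{x0})"
      proof
        fix S assume "S \<in> RXY"
        then have "S``{x0} \<subseteq> Y" using RXYsub(2) by blast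
        then show "finite (S``{x0})" using finY by (rule finite_subset)
      qed
      show "\<forall>S\<in>RXY. \<forall>S'\<in>RXY. S \<noteq> S' \<longrightarrow> S``{x0} \<inter> S'``{x0} = {}"
        using cc_disj[OF cc] RXYsub by blast
    qed
    then show ?thesis using Ydecomp cY by simp
  qed
  have pos: "card (S``{x0}) \<ge> 1" if SRp: "S \<in> RXY" for S
  proof -
    obtain s t where st: "(s,t) \<in> S" using cc_ne[OF cc RXYsub(1)[OF SRp]] by auto
    have sX: "s \<in> X" using st RXYsub(2)[OF SRp] by auto
    have "S``{s} \<subseteq> Y" using RXYsub(2)[OF SRp] by blast
    then have fin: "finite (S``{s})" using finY by (rule finite_subset)
    have "t \<in> S``{s}" using st by simp
    then have "card (S``{s}) \<ge> 1" using fin by (metis One_nat_def Suc_leI card_gt_0_iff empty_iff)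
    then show ?thesis using cc_reg[OF cc fX RXYsub(1)[OF SRp] sX x0] by simp
  qed
  show ?thesis
  proof (rule ccontr)
    assume no1: "1 \<notin> {valency X S | S. S \<in> rels_between \<R> X Y}"
    have n1: "card (S``{x0}) \<noteq> 1" if "S \<in> RXY" for S
      using no1 that valency_eq[OF cc fX RXYsub(1)[OF that] x0] unfolding RXY_def by force
    show False
    proof (cases "\<exists>S\<in>RXY. card (S``{x0}) = 89")
      case True
      then obtain S0 where S0: "S0 \<in> RXY" "card (S0``{x0}) = 89" by blast
      have "card (RXY - {S0}) > 0" using assms(9) S0(1) finRXY unfolding RXY_def[symmetric]
        by (simp add: card_Diff_singleton)
      then obtain S1 where S1: "S1 \<in> RXY - {S0}" by (metis card_gt_0_iff ex_in_conv)
      have "(\<Sum>S\<in>RXY. card (S``{x0})) = card (S0``{x0}) + (\<Sum>S\<in>RXY - {S0}. card (S``{x0}))"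
        using S0(1) finRXY by (simp add: sum.remove)
      moreover have "(\<Sum>S\<in>RXY - {S0}. card (S``{x0})) \<ge> card (S1``{x0})"
        using S1 finRXY by (intro member_le_sum) auto
      moreover have "card (S1``{x0}) \<ge> 1" using pos S1 by blast
      ultimately show False using sum89 S0(2) by simp
    next
      case False
      then have "\<forall>S\<in>RXY. 11 dvd card (S``{x0})" using perS n1 by blast
      then have "11 dvd (\<Sum>S\<in>RXY. card (S``{x0}))" by (simp add: dvd_sum)
      then show False using sum89 by simp
    qed
  qed
qed


end
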